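(* The structure $\mathbb{M}_1=(\{0,1,2\};\psi_2,\mu_2,\{0\},\{1\},\{2\})$ pp-constructs $\mathbb{M}_1''=(\{0,1,2\};\psi_2,\psi_2',\mu_2,\{0,1\},\{1,2\},\{0,2\},\{0\},\{1\},\{2\})$, and $\mathbb{M}_1''$ pp-constructs $\mathbb{M}_1$.
   Context: $\psi_2=\{(0,1),(1,0),(2,2)\}$, $\psi_2'=\{(0,1),(1,0)\}$, and $\mu_2$ is the equivalence relation on $\{0,1,2\}$ with classes $\{0,1\},\{2\}$. A relation is pp-definable in $\mathbb{A}$ if definable by a formula using the relations of $\mathbb{A}$, equality, conjunction and existential quantification. A pp-power of $\mathbb{A}$ is a structure isomorphic to one with domain $A^n$ whose $k$-ary relations, viewed as $kn$-ary relations on $A$, are pp-definable in $\mathbb{A}$. $\mathbb{A}$ pp-constructs $\mathbb{B}$ if $\mathbb{B}$ is homomorphically equivalent (homomorphisms in both directions) to a pp-power of $\mathbb{A}$. *)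

theory Defs
  imports Main
begin

text \<open>The signature is the list of arities; relations are identified by position.\<close>
type_synonym 'a rstruct = "'a set \<times> (nat \<times> 'a list set) list"

definition dom_of :: "'a rstruct \<Rightarrow> 'a set" where
  "dom_of S = fst S"

definition rels_of :: "'a rstruct \<Rightarrow> (nat \<times> 'a list set) list" where
  "rels_of S = snd S"

definition wf_struct :: "'a rstruct \<Rightarrow> bool" where
  "wf_struct S \<longleftrightarrow> (\<forall>(k, R) \<in> set (rels_of S).
      \<forall>t \<in> R. length t = k \<and> set t \<subseteq> dom_of S)"

datatype ppf = PAtom nat "nat list" | PEq nat nat | PConj ppf ppf | PEx nat ppf

fun pp_sat :: "'a rstruct \<Rightarrow> (nat \<Rightarrow> 'a) \<Rightarrow> ppf \<Rightarrow> bool" where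
  "pp_sat S e (PAtom i vs) \<longleftrightarrow> i < length (rels_of S) \<and> map e vs \<in> snd (rels_of S ! i)"
| "pp_sat S e (PEq x y) \<longleftrightarrow> e x = e y"
| "pp_sat S e (PConj \<phi> \<psi>) \<longleftrightarrow> pp_sat S e \<phi> \<and> pp_sat S e \<psi>"
| "pp_sat S e (PEx x \<phi>) \<longleftrightarrow> (\<exists>a \<in> dom_of S. pp_sat S (e(x := a)) \<phi>)"

text \<open>The k-ary relation defined by a pp-formula, with free variables 0..k-1
  (any further free variables are read existentially over the domain).\<close>
definition pp_defined :: "'a rstruct \<Rightarrow> nat \<Rightarrow> ppf \<Rightarrow> 'a list set" where
  "pp_defined S k \<phi> = {t. length t = k \<and> set t \<subseteq> dom_of S \<and>
      (\<exists>e. (\<forall>i. e i \<in> dom_of S) \<and> (\<forall>i<k. e i = t ! i) \<and> pp_sat S e \<phi>)}"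

definition pp_definable :: "'a rstruct \<Rightarrow> nat \<Rightarrow> 'a list set \<Rightarrow> bool" where
  "pp_definable S k R \<longleftrightarrow> (\<exists>\<phi>. R = pp_defined S k \<phi>)"

text \<open>C is a pp-power of S with exponent n: domain is S^n (lists of length n),
  and each k-ary relation, viewed as a kn-ary relation on the domain of S
  (by concatenating the tuple entries), is pp-definable in S.\<close>
definition pp_power :: "'a rstruct \<Rightarrow> nat \<Rightarrow> 'a list rstruct \<Rightarrow> bool" where
  "pp_power S n C \<longleftrightarrow>
     dom_of C = {xs. length xs = n \<and> set xs \<subseteq> dom_of S} \<and> wf_struct C \<and>
     (\<forall>(k, R) \<in> set (rels_of C). pp_definable S (k * n) (concat ` R))"

definition is_hom :: "('a \<Rightarrow> 'b) \<Rightarrow> 'a rstruct \<Rightarrow> 'b rstruct \<Rightarrow> bool" where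
  "is_hom h A B \<longleftrightarrow>
     map fst (rels_of A) = map fst (rels_of B) \<and>
     h ` dom_of A \<subseteq> dom_of B \<and>
     (\<forall>i < length (rels_of A). \<forall>t \<in> snd (rels_of A ! i). map h t \<in> snd (rels_of B ! i))"

definition hom_equiv :: "'a rstruct \<Rightarrow> 'b rstruct \<Rightarrow> bool" where
  "hom_equiv A B \<longleftrightarrow> (\<exists>h. is_hom h A B) \<and> (\<exists>g. is_hom g B A)"

definition pp_constructs :: "'a rstruct \<Rightarrow> 'b rstruct \<Rightarrow> bool" where
  "pp_constructs A B \<longleftrightarrow>
     (\<exists>n \<ge> 1. \<exists>C :: 'a list rstruct. pp_power A n C \<and> hom_equiv B C)"

definition psi2 :: "nat list set" where "psi2 = {[0,1],[1,0],[2,2]}"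
definition psi2' :: "nat list set" where "psi2' = {[0,1],[1,0]}"
definition mu2 :: "nat list set" where
  "mu2 = {[x,y] | x y. x \<in> {0,1} \<and> y \<in> {0,1}} \<union> {[2,2]}"

definition M1 :: "nat rstruct" where
  "M1 = ({0,1,2}, [(2, psi2), (2, mu2), (1, {[0]}), (1, {[1]}), (1, {[2]})])"

definition M1'' :: "nat rstruct" where
  "M1'' = ({0,1,2}, [(2, psi2), (2, psi2'), (2, mu2),
     (1, {[0],[1]}), (1, {[1],[2]}), (1, {[0],[2]}),
     (1, {[0]}), (1, {[1]}), (1, {[2]})])"

end

theory Submission
  imports Defs
begin

fun qf :: "nat \<Rightarrow> ppf \<Rightarrow> bool" where
  "qf k (PAtom i vs) = (\<forall>v\<in>set vs. v < k)"
| "qf k (PEq x y) = (x < k \<and> y < k)"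
| "qf k (PConj a b) = (qf k a \<and> qf k b)"
| "qf k (PEx x a) = False"

lemma qf_sat: fixes e e' :: "nat \<Rightarrow> 'a" and S :: "'a rstruct" shows "qf k \<phi> \<Longrightarrow> (\<forall>i<k. e i = e' i) \<Longrightarrow> pp_sat S e \<phi> = pp_sat S e' \<phi>"
proof (induction \<phi>)
  case (PAtom i vs)
  then have "map e vs = map e' vs" using PAtom by auto
  then show ?case by (simp only: pp_sat.simps)
qed auto

lemma pp_defined_eq:
  assumes "qf k \<phi>" "a0 \<in> dom_of S" "set xs = dom_of S"
  shows "pp_defined S k \<phi> = {t \<in> set (List.n_lists k xs). pp_sat S (\<lambda>i. if i<k then t!i else a0) \<phi>}"
proof (intro set_eqI iffI)
  fix t assume "t \<in> pp_defined S k \<phi>"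
  then obtain e where "length t = k" "set t \<subseteq> dom_of S" "\<forall>i<k. e i = t ! i" "pp_sat S e \<phi>"
    unfolding pp_defined_def by blast
  moreover have "pp_sat S e \<phi> = pp_sat S (\<lambda>i. if i<k then t!i else a0) \<phi>"
    by (rule qf_sat[OF assms(1)]) (use calculation(3) in simp)
  ultimately show "t \<in> {t \<in> set (List.n_lists k xs). pp_sat S (\<lambda>i. if i<k then t!i else a0) \<phi>}"
    using assms(3) by (simp add: set_n_lists)
next
  fix t assume "t \<in> {t \<in> set (List.n_lists k xs). pp_sat S (\<lambda>i. if i<k then t!i else a0) \<phi>}"
  then have t: "length t = k" "set t \<subseteq> dom_of S" "pp_sat S (\<lambda>i. if i<k then t!i else a0) \<phi>"
    using assms(3) by (auto simp: set_n_lists)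
  have "\<forall>i. (if i<k then t!i else a0) \<in> dom_of S" using t assms(2) by auto
  then show "t \<in> pp_defined S k \<phi>" unfolding pp_defined_def using t by auto
qed

fun pairs :: "'a list \<Rightarrow> 'a list list" where
  "pairs (a#b#r) = [a,b] # pairs r"
| "pairs _ = []"

lemma concat_pairs: "even (length s) \<Longrightarrow> concat (pairs s) = s"
  by (induction s rule: pairs.induct) auto

lemma length_pairs: "length (pairs s) = length s div 2"
  by (induction s rule: pairs.induct) auto

lemma set_pairs: "x \<in> set (pairs s) \<Longrightarrow> length x = 2 \<and> set x \<subseteq> set s"
  by (induction s rule: pairs.induct) auto

lemma pairs_concat: "\<forall>x\<in>set t. length x = 2 \<Longrightarrow> pairs (concat t) = t"
proof (induction t)
  case (Cons x t)
  then obtain a b where "x = [a,b]"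
    by (metis One_nat_def Suc_1 length_0_conv length_Suc_conv list.set_intros(1))
  with Cons show ?case by simp
qed simp

lemma pp_defined_sub: "s \<in> pp_defined S m \<phi> \<Longrightarrow> length s = m \<and> set s \<subseteq> dom_of S"
  unfolding pp_defined_def by auto

definition "P1 k \<phi> = pp_defined M1 (k*2) \<phi>"

definition C1 :: "nat list rstruct" where
  "C1 = ({xs. length xs = 2 \<and> set xs \<subseteq> {0,1,2}},
    [(2, pairs ` P1 2 (PConj (PEq 0 2) (PConj (PAtom 0 [1,3]) (PAtom 1 [0,1])))),
     (2, pairs ` P1 2 (PConj (PAtom 2 [0]) (PConj (PAtom 2 [2]) (PConj (PAtom 0 [1,3]) (PAtom 1 [0,1]))))),
     (2, pairs ` P1 2 (PConj (PAtom 1 [0,1]) (PConj (PAtom 1 [2,3]) (PAtom 1 [0,2])))),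
     (1, pairs ` P1 1 (PConj (PAtom 2 [0]) (PAtom 1 [0,1]))),
     (1, pairs ` P1 1 (PAtom 0 [0,1])),
     (1, pairs ` P1 1 (PEq 0 1)),
     (1, pairs ` P1 1 (PConj (PAtom 2 [0]) (PAtom 2 [1]))),
     (1, pairs ` P1 1 (PConj (PAtom 2 [0]) (PAtom 3 [1]))),
     (1, pairs ` P1 1 (PConj (PAtom 4 [0]) (PAtom 4 [1])))])"

lemma P1_eq: "qf (k*2) \<phi> \<Longrightarrow> P1 k \<phi> = {t \<in> set (List.n_lists (k*2) [0,1,2]). pp_sat M1 (\<lambda>i. if i<k*2 then t!i else 0) \<phi>}"
  unfolding P1_def by (rule pp_defined_eq) (auto simp: M1_def dom_of_def)

lemma pp_power_C1: "pp_power M1 2 C1"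
  unfolding pp_power_def
proof (intro conjI)
  show "dom_of C1 = {xs. length xs = 2 \<and> set xs \<subseteq> dom_of M1}"
    by (simp add: C1_def M1_def dom_of_def)
  have "\<And>k \<phi> t. t \<in> pairs ` P1 k \<phi> \<Longrightarrow> length t = k \<and> (\<forall>x\<in>set t. length x = 2 \<and> set x \<subseteq> {0,1,2})"
  proof -
    fix k \<phi> t assume "t \<in> pairs ` P1 k \<phi>"
    then obtain s where s: "s \<in> P1 k \<phi>" "t = pairs s" by auto
    then have "length s = k*2 \<and> set s \<subseteq> {0,1,2}" using pp_defined_sub unfolding P1_def
      by (metis M1_def dom_of_def fst_conv)
    then show "length t = k \<and> (\<forall>x\<in>set t. length x = 2 \<and> set x \<subseteq> {0,1,2})"
    proof -
      assume l: "length s = k*2 \<and> set s \<subseteq> {0,1,2}"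
      have "length t = k" using s(2) l by (simp add: length_pairs)
      moreover have "\<forall>x\<in>set t. length x = 2 \<and> set x \<subseteq> {0,1,2}"
        using s(2) l set_pairs by blast
      ultimately show ?thesis by blast
    qed
  qed
  then have W: "\<And>k \<phi>. (\<forall>t\<in>P1 k \<phi>. length (pairs t) = k \<and> set (pairs t) \<subseteq> {xs. length xs = 2 \<and> set xs \<subseteq> {0,1,2}}) = True"
    by blast
  show "wf_struct C1" unfolding wf_struct_def C1_def rels_of_def dom_of_def
    by (simp only: list.set ball_simps prod.case W simp_thms fst_conv snd_conv)
  have ev: "\<And>k \<phi>. concat ` pairs ` P1 k \<phi> = P1 k \<phi>"
  proof -
    fix k \<phi>
    have "\<And>s. s \<in> P1 k \<phi> \<Longrightarrow> concat (pairs s) = s"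
    proof -
      fix s assume "s \<in> P1 k \<phi>"
      then have "length s = k*2" using pp_defined_sub unfolding P1_def by blast
      then show "concat (pairs s) = s" by (intro concat_pairs) simp
    qed
    then show "concat ` pairs ` P1 k \<phi> = P1 k \<phi>" by (simp add: image_image)
  qed
  show "\<forall>(k, R)\<in>set (rels_of C1). pp_definable M1 (k * 2) (concat ` R)"
  proof -
    have E: "\<And>k \<phi>. (\<exists>\<phi>'. concat ` pairs ` P1 k \<phi> = pp_defined M1 (k*2) \<phi>') = True"
      using ev unfolding P1_def by blast
    show ?thesis unfolding C1_def rels_of_def pp_definable_def
      by (simp only: list.set ball_simps prod.case E simp_thms snd_conv)
  qed
qed

definition h1 :: "nat \<Rightarrow> nat list" where "h1 x = [if x = 2 then 2 else 0, x]"
definition g1 :: "nat list \<Rightarrow> nat" where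
  "g1 xs = (if xs = [2,2] then 2 else if xs = [0,1] \<or> xs = [1,0] then 1 else 0)"

lemma hom_iff:
  assumes "map fst (rels_of A) = map fst (rels_of B)" "h ` dom_of A \<subseteq> dom_of B"
    "list_all2 (\<lambda>(k,R) (k',R'). \<forall>t\<in>R. map h t \<in> R') (rels_of A) (rels_of B)"
  shows "is_hom h A B"
  unfolding is_hom_def
proof (intro conjI assms(1,2) allI impI ballI)
  fix i t assume i: "i < length (rels_of A)" and t: "t \<in> snd (rels_of A ! i)"
  have l: "length (rels_of A) = length (rels_of B)" "\<forall>i<length (rels_of A). (\<lambda>(k,R) (k',R'). \<forall>t\<in>R. map h t \<in> R') (rels_of A ! i) (rels_of B ! i)"
    using assms(3) unfolding list_all2_conv_all_nth by auto
  obtain k R where 1: "rels_of A ! i = (k,R)" by fastforce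
  obtain k' R' where 2: "rels_of B ! i = (k',R')" by fastforce
  show "map h t \<in> snd (rels_of B ! i)" using l(2) i t 1 2 by auto
qed

lemma hom_h1: "is_hom h1 M1'' C1"
proof (rule hom_iff)
  show "map fst (rels_of M1'') = map fst (rels_of C1)" by (simp add: M1''_def C1_def rels_of_def)
  show "h1 ` dom_of M1'' \<subseteq> dom_of C1" by (auto simp: M1''_def C1_def dom_of_def h1_def)
  have m: "\<And>t k \<phi>. concat (map h1 t) \<in> P1 k \<phi> \<Longrightarrow> map h1 t \<in> pairs ` P1 k \<phi>"
  proof -
    fix t k \<phi> assume a: "concat (map h1 t) \<in> P1 k \<phi>"
    have "pairs (concat (map h1 t)) = map h1 t" by (rule pairs_concat) (auto simp: h1_def)
    then show "map h1 t \<in> pairs ` P1 k \<phi>" using a by (metis image_eqI)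
  qed
  show "list_all2 (\<lambda>(k,R) (k',R'). \<forall>t\<in>R. map h1 t \<in> R') (rels_of M1'') (rels_of C1)"
    unfolding M1''_def C1_def rels_of_def
    apply (simp only: list_all2_Cons list_all2_Nil prod.case snd_conv)
    apply (intro conjI ballI m TrueI)
    apply (auto simp: P1_eq set_n_lists h1_def psi2_def psi2'_def mu2_def M1_def rels_of_def dom_of_def)
    done
qed

lemma ball_n_lists_0: "(\<forall>s\<in>set (List.n_lists 0 xs). Q s) = Q []"
  by simp

lemma ball_n_lists_Suc: "(\<forall>s\<in>set (List.n_lists (Suc n) xs). Q s) = (\<forall>x\<in>set xs. \<forall>r\<in>set (List.n_lists n xs). Q (x#r))"
  by (auto simp: set_n_lists length_Suc_conv)

lemma mg: "\<forall>s\<in>set (List.n_lists (k*2) [0,1,2]). pp_sat M1 (\<lambda>i. if i<k*2 then s!i else 0) \<phi> \<longrightarrow> map g1 (pairs s) \<in> R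
   \<Longrightarrow> qf (k*2) \<phi> \<Longrightarrow> \<forall>t\<in>pairs ` P1 k \<phi>. map g1 t \<in> R"
  by (auto simp: P1_eq)

lemma hom_g1: "is_hom g1 C1 M1''"
proof (rule hom_iff)
  show "map fst (rels_of C1) = map fst (rels_of M1'')" by (simp add: M1''_def C1_def rels_of_def)
  show "g1 ` dom_of C1 \<subseteq> dom_of M1''" by (auto simp: M1''_def C1_def dom_of_def g1_def)
  show "list_all2 (\<lambda>(k,R) (k',R'). \<forall>t\<in>R. map g1 t \<in> R') (rels_of C1) (rels_of M1'')"
    unfolding M1''_def C1_def rels_of_def
    apply (simp only: list_all2_Cons list_all2_Nil prod.case snd_conv)
    apply (intro conjI TrueI mg)
    apply (simp_all only: ball_n_lists_Suc ball_n_lists_0 numeral_eq_Suc pred_numeral_simps mult_Suc mult_0 One_nat_def)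
    apply (simp_all add: M1_def rels_of_def psi2_def psi2'_def mu2_def g1_def)
    done
qed

definition sing :: "nat list \<Rightarrow> nat list list" where "sing s = map (\<lambda>x. [x]) s"

definition "P2 k \<phi> = pp_defined M1'' (k*1) \<phi>"

definition C2 :: "nat list rstruct" where
  "C2 = ({xs. length xs = 1 \<and> set xs \<subseteq> {0,1,2}},
    [(2, sing ` P2 2 (PAtom 0 [0,1])), (2, sing ` P2 2 (PAtom 2 [0,1])),
     (1, sing ` P2 1 (PAtom 6 [0])), (1, sing ` P2 1 (PAtom 7 [0])), (1, sing ` P2 1 (PAtom 8 [0]))])"

lemma P2_eq: "qf (k*1) \<phi> \<Longrightarrow> P2 k \<phi> = {t \<in> set (List.n_lists (k*1) [0,1,2]). pp_sat M1'' (\<lambda>i. if i<k*1 then t!i else 0) \<phi>}"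
  unfolding P2_def by (rule pp_defined_eq) (auto simp: M1''_def dom_of_def)

lemma pp_power_C2: "pp_power M1'' 1 C2"
  unfolding pp_power_def
proof (intro conjI)
  show "dom_of C2 = {xs. length xs = 1 \<and> set xs \<subseteq> dom_of M1''}"
    by (simp add: C2_def M1''_def dom_of_def)
  have "\<And>k \<phi> s. s \<in> P2 k \<phi> \<Longrightarrow> length (sing s) = k \<and> set (sing s) \<subseteq> {xs. length xs = 1 \<and> set xs \<subseteq> {0,1,2}}"
  proof -
    fix k \<phi> s assume "s \<in> P2 k \<phi>"
    then have "length s = k*1 \<and> set s \<subseteq> {0,1,2}" using pp_defined_sub unfolding P2_def
      by (metis M1''_def dom_of_def fst_conv)
    then show "length (sing s) = k \<and> set (sing s) \<subseteq> {xs. length xs = 1 \<and> set xs \<subseteq> {0,1,2}}"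
      unfolding sing_def by auto
  qed
  then have W: "\<And>k \<phi>. (\<forall>t\<in>P2 k \<phi>. length (sing t) = k \<and> set (sing t) \<subseteq> {xs. length xs = 1 \<and> set xs \<subseteq> {0,1,2}}) = True"
    by blast
  show "wf_struct C2" unfolding wf_struct_def C2_def rels_of_def dom_of_def
    by (simp only: list.set ball_simps prod.case W simp_thms fst_conv snd_conv)
  have ev: "\<And>k \<phi>. concat ` sing ` P2 k \<phi> = P2 k \<phi>"
    by (simp add: image_image sing_def)
  have E: "\<And>k \<phi>. (\<exists>\<phi>'. concat ` sing ` P2 k \<phi> = pp_defined M1'' (k*1) \<phi>') = True"
    using ev unfolding P2_def by blast
  show "\<forall>(k, R)\<in>set (rels_of C2). pp_definable M1'' (k * 1) (concat ` R)"
    unfolding C2_def rels_of_def pp_definable_def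
    by (simp only: list.set ball_simps prod.case E simp_thms snd_conv)
qed

definition h2 :: "nat \<Rightarrow> nat list" where "h2 x = [x]"

lemma hom_h2: "is_hom h2 M1 C2"
proof (rule hom_iff)
  show "map fst (rels_of M1) = map fst (rels_of C2)" by (simp add: M1_def C2_def rels_of_def)
  show "h2 ` dom_of M1 \<subseteq> dom_of C2" by (auto simp: M1_def C2_def dom_of_def h2_def)
  have m: "\<And>t k \<phi>. t \<in> P2 k \<phi> \<Longrightarrow> map h2 t \<in> sing ` P2 k \<phi>"
    unfolding sing_def h2_def by blast
  show "list_all2 (\<lambda>(k,R) (k',R'). \<forall>t\<in>R. map h2 t \<in> R') (rels_of M1) (rels_of C2)"
    unfolding M1_def C2_def rels_of_def
    apply (simp only: list_all2_Cons list_all2_Nil prod.case snd_conv)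
    apply (intro conjI ballI m TrueI)
    apply (auto simp: P2_eq set_n_lists psi2_def mu2_def M1''_def rels_of_def dom_of_def)
    done
qed

lemma mg2: "\<forall>s\<in>set (List.n_lists (k*1) [0,1,2]). pp_sat M1'' (\<lambda>i. if i<k*1 then s!i else 0) \<phi> \<longrightarrow> map hd (sing s) \<in> R
   \<Longrightarrow> qf (k*1) \<phi> \<Longrightarrow> \<forall>t\<in>sing ` P2 k \<phi>. map hd t \<in> R"
  by (auto simp: P2_eq)

lemma hom_g2: "is_hom hd C2 M1"
proof (rule hom_iff)
  show "map fst (rels_of C2) = map fst (rels_of M1)" by (simp add: M1_def C2_def rels_of_def)
  show "hd ` dom_of C2 \<subseteq> dom_of M1"
  proof
    fix y assume "y \<in> hd ` dom_of C2"
    then obtain xs where "length xs = 1" "set xs \<subseteq> {0,1,2}" "y = hd xs" by (auto simp: C2_def dom_of_def)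
    then show "y \<in> dom_of M1" by (cases xs) (auto simp: M1_def dom_of_def)
  qed
  show "list_all2 (\<lambda>(k,R) (k',R'). \<forall>t\<in>R. map hd t \<in> R') (rels_of C2) (rels_of M1)"
    unfolding M1_def C2_def rels_of_def
    apply (simp only: list_all2_Cons list_all2_Nil prod.case snd_conv)
    apply (intro conjI TrueI mg2)
    apply (simp_all only: ball_n_lists_Suc ball_n_lists_0 numeral_eq_Suc pred_numeral_simps mult_Suc mult_0 One_nat_def)
    apply (simp_all add: M1''_def rels_of_def psi2_def psi2'_def mu2_def sing_def)
    done
qed

theorem lemma6p4:
  shows "pp_constructs M1 M1'' \<and> pp_constructs M1'' M1"
  unfolding pp_constructs_def hom_equiv_def
  using pp_power_C1 pp_power_C2 hom_h1 hom_g1 hom_h2 hom_g2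
  by (metis one_le_numeral order_refl)

end
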